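(* Let $G=(V,E)$ be an unweighted undirected graph with $n$ vertices and $m=|E|$ edges, and let $H$ be a $(1\pm\varepsilon)$-spectral sparsifier of $G$ for some small enough constant $\varepsilon>0$. Let $\widehat{H}$ denote the unweighted version of $H$. If for a pair of vertices $u,v\in V$ we set $s:=d_{\widehat{H}}(u,v)$, then $$R^G_{u,v}=\widetilde{\Omega}\!\left(\frac{s^2}{m}\right)\quad\text{and}\quad R^H_{u,v}=\widetilde{\Omega}\!\left(\frac{s^2}{m}\right).$$
   Context: A $(1\pm\varepsilon)$-spectral sparsifier of $G$ is a weighted graph $H=(V,E_H,w)$ with $E_H\subseteq E$ and positive weights such that $(1-\varepsilon)L_H\preceq L_G\preceq(1+\varepsilon)L_H$, where $L_G=B_G^\top B_G$ ($B_G$ the edge–vertex incidence matrix), $L_H=B_H^\top WB_H$ ($W$ the diagonal matrix of edge weights), and $A\preceq B$ means $x^\top Ax\le x^\top Bx$ for all $x$. $\widehat{H}$ is the graph $(V,E_H)$ with all weights equal to $1$, and $d_{\widehat{H}}$ its shortest-path (hop) distance. The effective resistance between $u,v$ in a graph $K$ is $R^K_{u,v}=b_{uv}^\top L_K^{+}b_{uv}$, where $b_{uv}=\chi_u-\chi_v$ and $L_K^+$ is the Moore–Penrose pseudoinverse. $\widetilde{\Omega}(f)$ means $f/\mathrm{polylog}(n)$. *)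

theory Defs
  imports Complex_Main "Jordan_Normal_Form.Matrix" "HOL-Library.Extended_Nat"
begin

text \<open>Weighted Laplacian  L = B^T W B, written entrywise (orientation independent):
  L_ij = sum over edges e of w e * (b_e)_i * (b_e)_j.\<close>

definition simple_graph :: "nat \<Rightarrow> nat set set \<Rightarrow> bool" where
  "simple_graph n E \<longleftrightarrow> (\<forall>e\<in>E. \<exists>a b. a < n \<and> b < n \<and> a \<noteq> b \<and> e = {a, b})"

definition laplacian :: "nat \<Rightarrow> nat set set \<Rightarrow> (nat set \<Rightarrow> real) \<Rightarrow> real mat" where
  "laplacian n E w = mat n n (\<lambda>(i, j). \<Sum>e\<in>E. w e *
      (if i = j then (if i \<in> e then 1 else 0) else (if e = {i, j} then -1 else 0)))"

definition loewner_le :: "real mat \<Rightarrow> real mat \<Rightarrow> bool" where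
  "loewner_le A B \<longleftrightarrow> (\<forall>x \<in> carrier_vec (dim_col A). x \<bullet> (A *\<^sub>v x) \<le> x \<bullet> (B *\<^sub>v x))"

definition is_spectral_sparsifier ::
  "nat \<Rightarrow> real \<Rightarrow> nat set set \<Rightarrow> nat set set \<Rightarrow> (nat set \<Rightarrow> real) \<Rightarrow> bool" where
  "is_spectral_sparsifier n \<epsilon> E EH w \<longleftrightarrow>
     EH \<subseteq> E \<and> (\<forall>e\<in>EH. w e > 0) \<and>
     loewner_le ((1 - \<epsilon>) \<cdot>\<^sub>m laplacian n EH w) (laplacian n E (\<lambda>_. 1)) \<and>
     loewner_le (laplacian n E (\<lambda>_. 1)) ((1 + \<epsilon>) \<cdot>\<^sub>m laplacian n EH w)"

definition pinv :: "real mat \<Rightarrow> real mat" where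
  "pinv A = (THE X. X \<in> carrier_mat (dim_col A) (dim_row A) \<and>
      A * X * A = A \<and> X * A * X = X \<and>
      transpose_mat (A * X) = A * X \<and> transpose_mat (X * A) = X * A)"

definition bvec :: "nat \<Rightarrow> nat \<Rightarrow> nat \<Rightarrow> real vec" where
  "bvec n u v = vec n (\<lambda>i. (if i = u then 1 else 0) - (if i = v then 1 else 0))"

definition eff_res :: "real mat \<Rightarrow> nat \<Rightarrow> nat \<Rightarrow> real" where
  "eff_res L u v = bvec (dim_row L) u v \<bullet> (pinv L *\<^sub>v bvec (dim_row L) u v)"

definition walk_of_len :: "nat set set \<Rightarrow> nat \<Rightarrow> nat \<Rightarrow> nat \<Rightarrow> bool" where
  "walk_of_len EH u v k \<longleftrightarrow> (\<exists>p. length p = Suc k \<and> hd p = u \<and> last p = v \<and>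
      (\<forall>i<k. {p ! i, p ! Suc i} \<in> EH))"

definition hop_dist :: "nat set set \<Rightarrow> nat \<Rightarrow> nat \<Rightarrow> enat" where
  "hop_dist EH u v = (if \<exists>k. walk_of_len EH u v k
      then enat (LEAST k. walk_of_len EH u v k) else \<infinity>)"

end

theory Submission
  imports Defs "Jordan_Normal_Form.Determinant"
begin


definition good :: "nat \<Rightarrow> nat set set \<Rightarrow> bool" where
  "good n F \<longleftrightarrow> (\<forall>e\<in>F. \<exists>a b. a < n \<and> b < n \<and> a \<noteq> b \<and> e = {a, b})"

definition cc :: "nat set \<Rightarrow> nat \<Rightarrow> nat \<Rightarrow> real" where
  "cc e i j = (if i = j then (if i \<in> e then 1 else 0) else (if e = {i, j} then -1 else 0))"

definition rr :: "nat \<Rightarrow> nat set \<Rightarrow> nat \<Rightarrow> real vec \<Rightarrow> real" where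
  "rr n e i x = (\<Sum>j<n. cc e i j * x $ j)"

lemma lap_alt: "laplacian n F w = mat n n (\<lambda>(i,j). \<Sum>e\<in>F. w e * cc e i j)"
  unfolding laplacian_def cc_def by simp

lemma lap_carrier[simp]: "laplacian n F w \<in> carrier_mat n n"
  unfolding laplacian_def by simp

lemma lap_dims[simp]: "dim_row (laplacian n F w) = n" "dim_col (laplacian n F w) = n"
  unfolding laplacian_def by simp_all

lemma lap_mult:
  assumes "x \<in> carrier_vec n"
  shows "laplacian n F w *\<^sub>v x = vec n (\<lambda>i. \<Sum>e\<in>F. w e * rr n e i x)"
proof (rule eq_vecI)
  fix i assume "i < dim_vec (vec n (\<lambda>i. \<Sum>e\<in>F. w e * rr n e i x))"
  then have i: "i < n" by simp
  have "(laplacian n F w *\<^sub>v x) $ i = (\<Sum>j<n. (\<Sum>e\<in>F. w e * cc e i j) * x $ j)"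
    using i assms unfolding lap_alt
    by (simp add: scalar_prod_def row_def lessThan_atLeast0)
  also have "\<dots> = (\<Sum>e\<in>F. w e * rr n e i x)"
    unfolding rr_def by (simp add: sum_distrib_left sum_distrib_right sum.swap[of _ F] mult.assoc)
  finally show "(laplacian n F w *\<^sub>v x) $ i = vec n (\<lambda>i. \<Sum>e\<in>F. w e * rr n e i x) $ i"
    using i by simp
qed (use assms in simp)

lemma sum_delta_lt: "(a::nat) < n \<Longrightarrow> (\<Sum>j<n. (if j = a then f j else 0)) = (f a :: real)"
  using sum.delta[of "{..<n}" a f] by simp

lemma rr_edge:
  assumes "a < n" "b < n" "a \<noteq> b" "i < n"
  shows "rr n {a,b} i x = (if i = a then x $ a - x $ b else if i = b then x $ b - x $ a else 0)"
proof -
  consider "i = a" | "i = b" | "i \<noteq> a" "i \<noteq> b" by blast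
  then show ?thesis
  proof cases
    case 1
    have "cc {a,b} i j * x $ j = (if j = a then x $ j else 0) - (if j = b then x $ j else 0)" for j
      using 1 assms(3) unfolding cc_def by (auto simp: doubleton_eq_iff)
    then show ?thesis using 1 assms unfolding rr_def by (simp add: sum_subtractf sum_delta_lt)
  next
    case 2
    have "cc {a,b} i j * x $ j = (if j = b then x $ j else 0) - (if j = a then x $ j else 0)" for j
      using 2 assms(3) unfolding cc_def by (auto simp: doubleton_eq_iff)
    then show ?thesis using 2 assms unfolding rr_def by (simp add: sum_subtractf sum_delta_lt)
  next
    case 3
    have z: "\<And>j. cc {a,b} i j * x $ j = 0"
      using 3 unfolding cc_def by (auto simp: doubleton_eq_iff)
    show ?thesis using 3 unfolding rr_def by (simp only: z sum.neutral_const) simp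
  qed
qed


definition ends :: "nat \<Rightarrow> nat set \<Rightarrow> nat \<times> nat" where
  "ends n e = (SOME p. fst p < n \<and> snd p < n \<and> fst p \<noteq> snd p \<and> e = {fst p, snd p})"

lemma ends:
  assumes "good n F" "e \<in> F"
  shows "fst (ends n e) < n \<and> snd (ends n e) < n \<and> fst (ends n e) \<noteq> snd (ends n e)
     \<and> e = {fst (ends n e), snd (ends n e)}"
proof -
  from assms obtain a b where "a < n \<and> b < n \<and> a \<noteq> b \<and> e = {a, b}" unfolding good_def by blast
  then have "\<exists>p. fst p < n \<and> snd p < n \<and> fst p \<noteq> snd p \<and> e = {fst p, snd p}"
    by (intro exI[of _ "(a,b)"]) simp
  then show ?thesis unfolding ends_def by (rule someI_ex)
qed

definition dd :: "nat \<Rightarrow> nat set \<Rightarrow> real vec \<Rightarrow> real" where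
  "dd n e x = x $ fst (ends n e) - x $ snd (ends n e)"

lemma sum_rr:
  assumes "a < n" "b < n" "a \<noteq> b"
  shows "(\<Sum>i<n. y $ i * rr n {a,b} i x) = (y $ a - y $ b) * (x $ a - x $ b)"
proof -
  have "(\<Sum>i<n. y $ i * rr n {a,b} i x) = (\<Sum>i<n. (if i = a then y $ i * (x $ a - x $ b) else 0)
     + (if i = b then y $ i * (x $ b - x $ a) else 0))"
    by (rule sum.cong) (use assms in \<open>simp_all add: rr_edge\<close>)
  also have "\<dots> = y $ a * (x $ a - x $ b) + y $ b * (x $ b - x $ a)"
    using assms by (simp add: sum.distrib sum_delta_lt)
  finally show ?thesis by (simp add: algebra_simps)
qed

lemma bilin:
  assumes "good n F" "x \<in> carrier_vec n" "y \<in> carrier_vec n"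
  shows "y \<bullet> (laplacian n F w *\<^sub>v x) = (\<Sum>e\<in>F. w e * (dd n e y * dd n e x))"
proof -
  have "y \<bullet> (laplacian n F w *\<^sub>v x) = (\<Sum>i<n. y $ i * (\<Sum>e\<in>F. w e * rr n e i x))"
    using assms by (simp add: lap_mult scalar_prod_def lessThan_atLeast0)
  also have "\<dots> = (\<Sum>e\<in>F. w e * (\<Sum>i<n. y $ i * rr n e i x))"
    by (simp add: sum_distrib_left sum.swap[of _ F] mult.left_commute)
  also have "\<dots> = (\<Sum>e\<in>F. w e * (dd n e y * dd n e x))"
  proof (rule sum.cong)
    fix e assume e: "e \<in> F"
    from ends[OF assms(1) e] show "w e * (\<Sum>i<n. y $ i * rr n e i x) = w e * (dd n e y * dd n e x)"
      unfolding dd_def using sum_rr[of "fst (ends n e)" n "snd (ends n e)" y x] by simp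
  qed simp
  finally show ?thesis .
qed


lemma quad:
  assumes "good n F" "x \<in> carrier_vec n"
  shows "x \<bullet> (laplacian n F w *\<^sub>v x) = (\<Sum>e\<in>F. w e * (dd n e x)^2)"
  using bilin[OF assms assms(2)] by (simp add: power2_eq_square)

lemma quad_nonneg:
  assumes "good n F" "x \<in> carrier_vec n" "\<forall>e\<in>F. w e > 0"
  shows "x \<bullet> (laplacian n F w *\<^sub>v x) \<ge> 0"
  unfolding quad[OF assms(1,2)] using assms(3) by (intro sum_nonneg mult_nonneg_nonneg) auto

lemma cc_sym: "cc e i j = cc e j i"
  unfolding cc_def by (auto simp: insert_commute)

lemma lap_sym: "transpose_mat (laplacian n F w) = laplacian n F w"
  unfolding lap_alt by (rule eq_matI) (auto simp: cc_sym)

lemma lap_zero: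
  assumes "good n F" "x \<in> carrier_vec n" "\<forall>e\<in>F. dd n e x = 0"
  shows "laplacian n F w *\<^sub>v x = 0\<^sub>v n"
proof -
  have "rr n e i x = 0" if e: "e \<in> F" and i: "i < n" for e i
  proof -
    from ends[OF assms(1) e] obtain a b where ab: "a < n" "b < n" "a \<noteq> b" "e = {a,b}"
      and "dd n e x = x $ a - x $ b" unfolding dd_def by blast
    with assms(3) e have "x $ a = x $ b" by simp
    then show ?thesis using ab i by (simp add: rr_edge)
  qed
  then show ?thesis using assms(2) by (auto simp: lap_mult)
qed

definition conn :: "nat set set \<Rightarrow> (nat \<times> nat) set" where
  "conn F = ({(a,b). {a,b} \<in> F})\<^sup>*"

lemma conn_sym: "(a,b) \<in> conn F \<Longrightarrow> (b,a) \<in> conn F"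
proof -
  have "sym {(a,b). {a,b} \<in> F}" by (auto simp: sym_def insert_commute)
  then have "sym (conn F)" unfolding conn_def by (rule sym_rtrancl)
  then show "(a,b) \<in> conn F \<Longrightarrow> (b,a) \<in> conn F" by (auto dest: symD)
qed

lemma conn_trans: "(a,b) \<in> conn F \<Longrightarrow> (b,c) \<in> conn F \<Longrightarrow> (a,c) \<in> conn F"
  unfolding conn_def by (rule rtrancl_trans)

lemma conn_refl: "(a,a) \<in> conn F"
  unfolding conn_def by simp

lemma conn_edge: "{a,b} \<in> F \<Longrightarrow> (a,b) \<in> conn F"
  unfolding conn_def by auto

lemma const_conn:
  assumes "good n F" "\<forall>e\<in>F. dd n e x = 0" "(i,j) \<in> conn F"
  shows "x $ i = x $ j"
proof -
  from assms(3) have "(i,j) \<in> ({(a,b). {a,b} \<in> F})\<^sup>*" unfolding conn_def .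
  then show ?thesis
  proof (induction rule: rtrancl_induct)
    case base then show ?case by simp
  next
    case (step j k)
    then have e: "{j,k} \<in> F" by simp
    from ends[OF assms(1) e] assms(2) e have "x $ j = x $ k"
      unfolding dd_def by (auto simp: doubleton_eq_iff)
    with step show ?case by simp
  qed
qed

definition cls :: "nat set set \<Rightarrow> nat \<Rightarrow> nat \<Rightarrow> nat set" where
  "cls F n i = {j. j < n \<and> (i,j) \<in> conn F}"

lemma cls_fin: "finite (cls F n i)" unfolding cls_def by simp

lemma cls_sub: "cls F n i \<subseteq> {..<n}" unfolding cls_def by auto

lemma cls_card: "i < n \<Longrightarrow> card (cls F n i) > 0"
  using cls_fin[of F n i] conn_refl[of i F] unfolding cls_def
  by (metis (mono_tags, lifting) card_0_eq empty_iff gr0I mem_Collect_eq)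

lemma cls_eq: "(i,j) \<in> conn F \<Longrightarrow> cls F n i = cls F n j"
  unfolding cls_def by (auto intro: conn_trans conn_sym)

definition PP :: "nat \<Rightarrow> nat set set \<Rightarrow> real mat" where
  "PP n F = mat n n (\<lambda>(i,j). if (i,j) \<in> conn F then 1 / real (card (cls F n i)) else 0)"

lemma PP_carrier[simp]: "PP n F \<in> carrier_mat n n" unfolding PP_def by simp
lemma PP_dims[simp]: "dim_row (PP n F) = n" "dim_col (PP n F) = n" unfolding PP_def by simp_all

lemma PP_sym: "transpose_mat (PP n F) = PP n F"
proof (rule eq_matI)
  fix i j assume "i < dim_row (PP n F)" "j < dim_col (PP n F)"
  then have ij: "i < n" "j < n" by simp_all
  have "(j,i) \<in> conn F \<longleftrightarrow> (i,j) \<in> conn F" by (meson conn_sym)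
  moreover have "(i,j) \<in> conn F \<Longrightarrow> cls F n j = cls F n i" by (simp add: cls_eq)
  ultimately show "transpose_mat (PP n F) $$ (i,j) = PP n F $$ (i,j)"
    using ij unfolding PP_def by simp
qed simp_all

lemma PP_idem: "PP n F * PP n F = PP n F"
proof (rule eq_matI)
  fix i j assume "i < dim_row (PP n F)" "j < dim_col (PP n F)"
  then have ij: "i < n" "j < n" by simp_all
  let ?c = "real (card (cls F n i))"
  have "(PP n F * PP n F) $$ (i,j) = (\<Sum>k<n. PP n F $$ (i,k) * PP n F $$ (k,j))"
    using ij by (simp add: scalar_prod_def lessThan_atLeast0)
  also have "\<dots> = (\<Sum>k<n. if k \<in> cls F n i then (if (i,j) \<in> conn F then 1 / ?c^2 else 0) else 0)"
  proof (rule sum.cong)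
    fix k assume "k \<in> {..<n}"
    then have k: "k < n" by simp
    show "PP n F $$ (i,k) * PP n F $$ (k,j) = (if k \<in> cls F n i then (if (i,j) \<in> conn F then 1 / ?c^2 else 0) else 0)"
    proof (cases "(i,k) \<in> conn F")
      case True
      then have "cls F n k = cls F n i" by (simp add: cls_eq)
      moreover have "(k,j) \<in> conn F \<longleftrightarrow> (i,j) \<in> conn F"
        using True by (meson conn_sym conn_trans)
      ultimately show ?thesis using True ij k unfolding PP_def cls_def by (simp add: power2_eq_square)
    next
      case False
      then show ?thesis using ij k unfolding PP_def cls_def by simp
    qed
  qed simp
  also have "\<dots> = (if (i,j) \<in> conn F then ?c * (1 / ?c^2) else 0)"
    using cls_sub[of F n i] by (simp add: sum.If_cases Int_absorb1)
  also have "\<dots> = PP n F $$ (i,j)"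
    using cls_card[OF ij(1), of F] ij unfolding PP_def by (simp add: power2_eq_square)
  finally show "(PP n F * PP n F) $$ (i,j) = PP n F $$ (i,j)" .
qed auto


lemma LP_zero:
  assumes "good n F"
  shows "laplacian n F w * PP n F = 0\<^sub>m n n"
proof (rule eq_matI)
  fix i j assume "i < dim_row (0\<^sub>m n n :: real mat)" "j < dim_col (0\<^sub>m n n :: real mat)"
  then have ij: "i < n" "j < n" by simp_all
  have "\<forall>e\<in>F. dd n e (col (PP n F) j) = 0"
  proof
    fix e assume e: "e \<in> F"
    let ?a = "fst (ends n e)" and ?b = "snd (ends n e)"
    from ends[OF assms e] have ab: "?a < n" "?b < n" "e = {?a, ?b}" by auto
    then have ab': "(?a, ?b) \<in> conn F" using e conn_edge by metis
    then have "(?a, j) \<in> conn F \<longleftrightarrow> (?b, j) \<in> conn F" by (meson conn_sym conn_trans)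
    moreover have "cls F n ?a = cls F n ?b" using ab' cls_eq by blast
    ultimately show "dd n e (col (PP n F) j) = 0" using ab ij unfolding dd_def PP_def by simp
  qed
  then have "laplacian n F w *\<^sub>v col (PP n F) j = 0\<^sub>v n"
    using ij by (intro lap_zero[OF assms]) auto
  then have "(laplacian n F w *\<^sub>v col (PP n F) j) $ i = 0" using ij by simp
  then show "(laplacian n F w * PP n F) $$ (i,j) = (0\<^sub>m n n :: real mat) $$ (i,j)"
    using ij by simp
qed auto

lemma PL_zero:
  assumes "good n F"
  shows "PP n F * laplacian n F w = 0\<^sub>m n n"
proof -
  have "PP n F * laplacian n F w = transpose_mat (transpose_mat (laplacian n F w) * transpose_mat (PP n F))"
    by (subst transpose_mult[of _ n n _ n]) auto
  also have "\<dots> = transpose_mat (laplacian n F w * PP n F)" by (simp add: lap_sym PP_sym)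
  also have "\<dots> = 0\<^sub>m n n" using LP_zero[OF assms] by simp
  finally show ?thesis .
qed

lemma PP_b:
  assumes "(u,v) \<in> conn F" "u < n" "v < n"
  shows "PP n F *\<^sub>v bvec n u v = 0\<^sub>v n"
proof (rule eq_vecI)
  fix i assume "i < dim_vec (0\<^sub>v n :: real vec)"
  then have i: "i < n" by simp
  have "(PP n F *\<^sub>v bvec n u v) $ i = (\<Sum>j<n. PP n F $$ (i,j) * ((if j = u then 1 else 0) - (if j = v then 1 else 0)))"
    using i unfolding bvec_def by (simp add: scalar_prod_def lessThan_atLeast0)
  also have "\<dots> = (\<Sum>j<n. (if j = u then PP n F $$ (i,j) else 0)) - (\<Sum>j<n. (if j = v then PP n F $$ (i,j) else 0))"
    by (simp only: sum_subtractf[symmetric]) (rule sum.cong, auto)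
  also have "\<dots> = PP n F $$ (i,u) - PP n F $$ (i,v)" using assms by (simp add: sum_delta_lt)
  also have "\<dots> = 0"
  proof -
    have "(i,u) \<in> conn F \<longleftrightarrow> (i,v) \<in> conn F" using assms(1) by (meson conn_sym conn_trans)
    then show ?thesis using i assms unfolding PP_def by simp
  qed
  finally show "(PP n F *\<^sub>v bvec n u v) $ i = 0\<^sub>v n $ i" using i by simp
qed simp

lemma proj_quad:
  assumes P: "(P :: real mat) \<in> carrier_mat n n" "transpose_mat P = P" "P * P = P" and x: "x \<in> carrier_vec n"
  shows "x \<bullet> (P *\<^sub>v x) = (P *\<^sub>v x) \<bullet> (P *\<^sub>v x)"
proof -
  have "P *\<^sub>v x = P *\<^sub>v (P *\<^sub>v x)" using P x by (metis assoc_mult_mat_vec)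
  then have "x \<bullet> (P *\<^sub>v x) = x \<bullet> (P *\<^sub>v (P *\<^sub>v x))" by simp
  also have "\<dots> = (transpose_mat P *\<^sub>v x) \<bullet> (P *\<^sub>v x)"
    using transpose_vec_mult_scalar[OF P(1), of "P *\<^sub>v x" x] P x by simp
  finally show ?thesis using P by simp
qed

lemma sq_vec_nonneg: "(v :: real vec) \<bullet> v \<ge> 0"
  unfolding scalar_prod_def by (intro sum_nonneg) simp

lemma sq_vec_zero: "(v :: real vec) \<bullet> v = 0 \<Longrightarrow> v \<in> carrier_vec n \<Longrightarrow> v = 0\<^sub>v n"
proof -
  assume h: "v \<bullet> v = 0" and c: "v \<in> carrier_vec n"
  have "\<forall>i\<in>{0..<dim_vec v}. v $ i * v $ i = 0"
    using h unfolding scalar_prod_def by (subst sum_nonneg_eq_0_iff[symmetric]) auto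
  then show ?thesis using c by (intro eq_vecI) auto
qed

lemma inv_exists:
  assumes A: "(A :: real mat) \<in> carrier_mat n n"
    and inj: "\<And>x. x \<in> carrier_vec n \<Longrightarrow> A *\<^sub>v x = 0\<^sub>v n \<Longrightarrow> x = 0\<^sub>v n"
  shows "\<exists>M. M \<in> carrier_mat n n \<and> M * A = 1\<^sub>m n \<and> A * M = 1\<^sub>m n"
proof -
  have "det A \<noteq> 0" using det_0_iff_vec_prod_zero_field[OF A] inj by blast
  from det_non_zero_imp_unit[OF A this, of "()"]
  show ?thesis unfolding Units_def ring_mat_def by auto
qed




lemma good_finite: "good n F \<Longrightarrow> finite F"
proof -
  assume g: "good n F"
  have "F \<subseteq> (\<lambda>p. {fst p, snd p}) ` ({..<n} \<times> {..<n})"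
  proof
    fix e assume "e \<in> F"
    then obtain a b where "a < n" "b < n" "e = {a,b}" using g unfolding good_def by blast
    then show "e \<in> (\<lambda>p. {fst p, snd p}) ` ({..<n} \<times> {..<n})"
      by (intro image_eqI[of _ _ "(a,b)"]) auto
  qed
  then show ?thesis by (rule finite_subset) simp
qed

lemma PP_apply:
  assumes "i < n" "x \<in> carrier_vec n" "\<forall>j. (i,j) \<in> conn F \<longrightarrow> x $ j = x $ i"
  shows "(PP n F *\<^sub>v x) $ i = x $ i"
proof -
  let ?c = "real (card (cls F n i))"
  have "(PP n F *\<^sub>v x) $ i = (\<Sum>j<n. (if j \<in> cls F n i then x $ i / ?c else 0))"
    using assms unfolding PP_def cls_def by (auto simp add: scalar_prod_def lessThan_atLeast0 intro!: sum.cong)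
  also have "\<dots> = ?c * (x $ i / ?c)"
    using cls_sub[of F n i] by (simp add: sum.If_cases Int_absorb1)
  also have "\<dots> = x $ i" using cls_card[OF assms(1), of F] by simp
  finally show ?thesis .
qed



lemma LP_inj:
  assumes g: "good n F" and w: "\<forall>e\<in>F. w e > 0" and x: "x \<in> carrier_vec n"
    and z: "(laplacian n F w + PP n F) *\<^sub>v x = 0\<^sub>v n"
  shows "x = 0\<^sub>v n"
proof -
  let ?L = "laplacian n F w" and ?P = "PP n F"
  have "x \<bullet> ((?L + ?P) *\<^sub>v x) = x \<bullet> (?L *\<^sub>v x) + x \<bullet> (?P *\<^sub>v x)"
  proof -
    have e1: "(?L + ?P) *\<^sub>v x = ?L *\<^sub>v x + ?P *\<^sub>v x"
      by (rule add_mult_distrib_mat_vec[OF lap_carrier PP_carrier x])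
    show ?thesis unfolding e1
      by (rule scalar_prod_add_distrib[OF x mult_mat_vec_carrier[OF lap_carrier x] mult_mat_vec_carrier[OF PP_carrier x]])
  qed
  moreover have "x \<bullet> ((?L + ?P) *\<^sub>v x) = 0" unfolding z by (rule scalar_prod_right_zero[OF x])
  ultimately have s: "x \<bullet> (?L *\<^sub>v x) + x \<bullet> (?P *\<^sub>v x) = 0" by simp
  have q1: "x \<bullet> (?L *\<^sub>v x) \<ge> 0" using quad_nonneg[OF g x w] .
  have pq: "x \<bullet> (?P *\<^sub>v x) = (?P *\<^sub>v x) \<bullet> (?P *\<^sub>v x)"
    using proj_quad[OF PP_carrier PP_sym PP_idem x] .
  have q2: "x \<bullet> (?P *\<^sub>v x) \<ge> 0" unfolding pq by (rule sq_vec_nonneg)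
  have L0: "x \<bullet> (?L *\<^sub>v x) = 0" using s q1 q2 by linarith
  have "x \<bullet> (?P *\<^sub>v x) = 0" using s L0 by simp
  then have "(?P *\<^sub>v x) \<bullet> (?P *\<^sub>v x) = 0" unfolding pq .
  moreover have Pc: "?P *\<^sub>v x \<in> carrier_vec n" by (rule mult_mat_vec_carrier[OF PP_carrier x])
  ultimately have P0: "?P *\<^sub>v x = 0\<^sub>v n" by (rule sq_vec_zero)
  have "(\<Sum>e\<in>F. w e * (dd n e x)^2) = 0" using L0 quad[OF g x] by simp
  moreover have "(\<Sum>e\<in>F. w e * (dd n e x)^2) = 0 \<longleftrightarrow> (\<forall>e\<in>F. w e * (dd n e x)^2 = 0)"
  proof (rule sum_nonneg_eq_0_iff[OF good_finite[OF g]])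
    fix e assume "e \<in> F"
    then have "w e > 0" using w by blast
    then show "0 \<le> w e * (dd n e x)^2" by simp
  qed
  ultimately have h0: "\<forall>e\<in>F. w e * (dd n e x)^2 = 0" by blast
  have d0: "\<forall>e\<in>F. dd n e x = 0"
  proof
    fix e assume e: "e \<in> F"
    then have "w e > 0" using w by blast
    moreover have "w e * (dd n e x)^2 = 0" using h0 e by blast
    ultimately show "dd n e x = 0" by simp
  qed
  show ?thesis
  proof (rule eq_vecI)
    fix i assume "i < dim_vec (0\<^sub>v n :: real vec)"
    then have i: "i < n" by simp
    have "\<forall>j. (i,j) \<in> conn F \<longrightarrow> x $ j = x $ i"
    proof (intro allI impI)
      fix j assume "(i,j) \<in> conn F"
      then show "x $ j = x $ i" using const_conn[OF g d0, of i j] by simp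
    qed
    then have "(?P *\<^sub>v x) $ i = x $ i" using PP_apply[OF i x] by blast
    then show "x $ i = 0\<^sub>v n $ i" using P0 i by simp
  qed (use x in simp)
qed



lemma add_eq_imp: 
  assumes "(B :: real mat) \<in> carrier_mat n n" "C \<in> carrier_mat n n" "D \<in> carrier_mat n n" "B + C = D"
  shows "B = D - C"
proof (rule eq_matI)
  fix i j assume "i < dim_row (D - C)" "j < dim_col (D - C)"
  then have ij: "i < n" "j < n" using assms by auto
  have "(B + C) $$ (i,j) = D $$ (i,j)" using assms(4) by simp
  then have "B $$ (i,j) + C $$ (i,j) = D $$ (i,j)" using ij assms(1-3) by (metis carrier_matD index_add_mat(1))
  then show "B $$ (i,j) = (D - C) $$ (i,j)" using ij assms(1-3) by (metis carrier_matD index_minus_mat(1) eq_diff_eq)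
qed (use assms in auto)

lemma pinv_unique:
  fixes A X1 X2 :: "real mat"
  assumes c: "A \<in> carrier_mat n n" "X1 \<in> carrier_mat n n" "X2 \<in> carrier_mat n n"
    and p1: "A * X1 * A = A" "X1 * A * X1 = X1" "transpose_mat (A * X1) = A * X1" "transpose_mat (X1 * A) = X1 * A"
    and p2: "A * X2 * A = A" "X2 * A * X2 = X2" "transpose_mat (A * X2) = A * X2" "transpose_mat (X2 * A) = X2 * A"
  shows "X1 = X2"
proof -
  note as = assoc_mult_mat[of _ n n _ n _ n]
  have AX: "A * X1 = A * X2"
  proof -
    have "A * X1 = (A * X2 * A) * X1" by (simp only: p2(1))
    also have "\<dots> = (A * X2) * (A * X1)" using c by (simp only: as mult_carrier_mat)
    also have "\<dots> = transpose_mat (A * X2) * transpose_mat (A * X1)" by (simp only: p1(3) p2(3))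
    also have "\<dots> = transpose_mat ((A * X1) * (A * X2))" using c by (simp only: transpose_mult[of _ n n _ n] mult_carrier_mat)
    also have "(A * X1) * (A * X2) = (A * X1 * A) * X2" using c by (simp only: as mult_carrier_mat)
    also have "\<dots> = A * X2" by (simp only: p1(1))
    finally show ?thesis by (simp only: p2(3))
  qed
  have XA: "X1 * A = X2 * A"
  proof -
    have "X1 * A = X1 * (A * X2 * A)" by (simp only: p2(1))
    also have "\<dots> = (X1 * A) * (X2 * A)" using c by (simp only: as mult_carrier_mat)
    also have "\<dots> = transpose_mat (X1 * A) * transpose_mat (X2 * A)" by (simp only: p1(4) p2(4))
    also have "\<dots> = transpose_mat ((X2 * A) * (X1 * A))" using c by (simp only: transpose_mult[of _ n n _ n] mult_carrier_mat)
    also have "(X2 * A) * (X1 * A) = X2 * (A * X1 * A)" using c by (simp only: as mult_carrier_mat)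
    also have "\<dots> = X2 * A" by (simp only: p1(1))
    finally show ?thesis by (simp only: p2(4))
  qed
  have "X1 = X1 * A * X1" by (simp only: p1(2))
  also have "\<dots> = X1 * (A * X1)" using c by (simp only: as)
  also have "\<dots> = X1 * (A * X2)" by (simp only: AX)
  also have "\<dots> = (X1 * A) * X2" using c by (simp only: as)
  also have "\<dots> = (X2 * A) * X2" by (simp only: XA)
  also have "\<dots> = X2" by (simp only: p2(2))
  finally show ?thesis .
qed

lemma mat_minus_zero: "dim_row (A :: real mat) = n \<Longrightarrow> dim_col A = n \<Longrightarrow> A - 0\<^sub>m n n = A"
  by (intro eq_matI) auto
lemma mat_zero_add: "(A :: real mat) \<in> carrier_mat n n \<Longrightarrow> 0\<^sub>m n n + A = A"
  by (intro eq_matI) auto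
lemma mat_h3: "(A :: real mat) \<in> carrier_mat n n \<Longrightarrow> B \<in> carrier_mat n n \<Longrightarrow> (A - B) - (B - B) = A - B"
  by (intro eq_matI) auto

lemma penrose_construct:
  fixes L P M :: "real mat"
  assumes c: "L \<in> carrier_mat n n" "P \<in> carrier_mat n n" "M \<in> carrier_mat n n"
    and LP: "L * P = 0\<^sub>m n n" and PL: "P * L = 0\<^sub>m n n" and PP: "P * P = P"
    and Ls: "transpose_mat L = L" and Ps: "transpose_mat P = P"
    and M1: "M * (L + P) = 1\<^sub>m n" and M2: "(L + P) * M = 1\<^sub>m n"
  shows "L * (M - P) * L = L" "(M - P) * L * (M - P) = M - P"
    "transpose_mat (L * (M - P)) = L * (M - P)" "transpose_mat ((M - P) * L) = (M - P) * L"
    "L * (M - P) = 1\<^sub>m n - P"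
proof -
  note as = assoc_mult_mat[of _ n n _ n _ n]
  have AP: "(L + P) * P = P" using c by (simp add: add_mult_distrib_mat[of _ n n] LP PP mat_zero_add)
  have PA: "P * (L + P) = P" using c by (simp add: mult_add_distrib_mat[of _ n n] PL PP mat_zero_add)
  have MP: "M * P = P"
  proof -
    have "M * P = M * ((L + P) * P)" by (simp only: AP)
    also have "\<dots> = (M * (L + P)) * P" using c by (intro as[symmetric]) auto
    also have "\<dots> = 1\<^sub>m n * P" by (simp only: M1)
    also have "\<dots> = P" using c by simp
    finally show ?thesis .
  qed
  have PM: "P * M = P"
  proof -
    have "P * M = (P * (L + P)) * M" by (simp only: PA)
    also have "\<dots> = P * ((L + P) * M)" using c by (intro as) auto
    also have "\<dots> = P * 1\<^sub>m n" by (simp only: M2)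
    also have "\<dots> = P" using c by simp
    finally show ?thesis .
  qed
  have LM: "L * M = 1\<^sub>m n - P"
  proof (rule add_eq_imp)
    show "L * M + P = 1\<^sub>m n" using M2 c by (simp add: add_mult_distrib_mat[of _ n n] PM)
  qed (use c in auto)
  have MLe: "M * L = 1\<^sub>m n - P"
  proof (rule add_eq_imp)
    show "M * L + P = 1\<^sub>m n" using M1 c by (simp add: mult_add_distrib_mat[of _ n n] MP)
  qed (use c in auto)
  have LX: "L * (M - P) = 1\<^sub>m n - P"
    using c by (simp add: mult_minus_distrib_mat[of _ n n] LM LP mat_minus_zero)
  have XL: "(M - P) * L = 1\<^sub>m n - P"
    using c by (simp add: minus_mult_distrib_mat[of _ n n] MLe PL mat_minus_zero)
  have T: "transpose_mat (1\<^sub>m n - P) = 1\<^sub>m n - P"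
    using c Ps by (subst transpose_minus[of _ n n]) auto
  show "L * (M - P) = 1\<^sub>m n - P" by (rule LX)
  show "transpose_mat (L * (M - P)) = L * (M - P)" using LX T by simp
  show "transpose_mat ((M - P) * L) = (M - P) * L" using XL T by simp
  show "L * (M - P) * L = L"
    using c by (simp add: LX minus_mult_distrib_mat[of _ n n] PL mat_minus_zero)
  have "(M - P) * L * (M - P) = (1\<^sub>m n - P) * (M - P)" by (simp only: XL)
  also have "\<dots> = (1\<^sub>m n - P) * M - (1\<^sub>m n - P) * P"
    using c by (intro mult_minus_distrib_mat[of _ n n]) auto
  also have "(1\<^sub>m n - P) * M = 1\<^sub>m n * M - P * M"
    using c by (intro minus_mult_distrib_mat[of _ n n]) auto
  also have "(1\<^sub>m n - P) * P = 1\<^sub>m n * P - P * P"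
    using c by (intro minus_mult_distrib_mat[of _ n n]) auto
  also have "1\<^sub>m n * M - P * M - (1\<^sub>m n * P - P * P) = (M - P * M) - (P - P * P)"
    using c by simp
  also have "\<dots> = M - P" using c by (simp only: PM PP) (rule mat_h3)
  finally show "(M - P) * L * (M - P) = M - P" .
qed




lemma bvec_carrier: "bvec n u v \<in> carrier_vec n" unfolding bvec_def by (rule vec_carrier)

lemma pinv_lap:
  assumes g: "good n F" and w: "\<forall>e\<in>F. w e > 0"
  shows "pinv (laplacian n F w) \<in> carrier_mat n n \<and>
    laplacian n F w * pinv (laplacian n F w) = 1\<^sub>m n - PP n F"
proof -
  let ?L = "laplacian n F w" and ?P = "PP n F"
  have Ac: "?L + ?P \<in> carrier_mat n n" by simp
  obtain M where M: "M \<in> carrier_mat n n" "M * (?L + ?P) = 1\<^sub>m n" "(?L + ?P) * M = 1\<^sub>m n"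
    using inv_exists[OF Ac LP_inj[OF g w]] by blast
  note pc = penrose_construct[OF lap_carrier PP_carrier M(1) LP_zero[OF g] PL_zero[OF g] PP_idem
      lap_sym PP_sym M(2) M(3)]
  have Xc: "M - ?P \<in> carrier_mat n n" using M(1) unfolding carrier_mat_def by simp
  have "pinv ?L = M - ?P"
    unfolding pinv_def
  proof (rule the_equality)
    show "M - ?P \<in> carrier_mat (dim_col ?L) (dim_row ?L) \<and>
        ?L * (M - ?P) * ?L = ?L \<and> (M - ?P) * ?L * (M - ?P) = M - ?P \<and>
        transpose_mat (?L * (M - ?P)) = ?L * (M - ?P) \<and> transpose_mat ((M - ?P) * ?L) = (M - ?P) * ?L"
      unfolding lap_dims using Xc pc(1) pc(2) pc(3) pc(4) by (intro conjI)
  next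
    fix X assume "X \<in> carrier_mat (dim_col ?L) (dim_row ?L) \<and>
        ?L * X * ?L = ?L \<and> X * ?L * X = X \<and>
        transpose_mat (?L * X) = ?L * X \<and> transpose_mat (X * ?L) = X * ?L"
    note H = this
    have Xc': "X \<in> carrier_mat n n" using H[THEN conjunct1] by (simp only: lap_dims)
    show "X = M - ?P"
      by (rule pinv_unique[OF lap_carrier Xc' Xc H[THEN conjunct2, THEN conjunct1]
        H[THEN conjunct2, THEN conjunct2, THEN conjunct1]
        H[THEN conjunct2, THEN conjunct2, THEN conjunct2, THEN conjunct1]
        H[THEN conjunct2, THEN conjunct2, THEN conjunct2, THEN conjunct2]
        pc(1) pc(2) pc(3) pc(4)])
  qed
  then show ?thesis using Xc pc(5) by (simp only:)
qed



lemma cs_sum: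
  fixes a b :: "'a \<Rightarrow> real"
  shows "(\<Sum>i\<in>I. a i * b i)\<^sup>2 \<le> (\<Sum>i\<in>I. (a i)\<^sup>2) * (\<Sum>i\<in>I. (b i)\<^sup>2)"
proof (cases "(\<Sum>i\<in>I. (b i)\<^sup>2) > 0")
  case False
  then consider "\<And>i. i\<in>I \<Longrightarrow> b i = 0" | "infinite I"
    by (metis (mono_tags, lifting) sum_pos2 zero_le_power2 zero_less_power2)
  thus ?thesis
    by fastforce
next
  case True
  define r where "r \<equiv> (\<Sum>i\<in>I. a i * b i) / (\<Sum>i\<in>I. (b i)\<^sup>2)"
  have "0 \<le> (\<Sum>i\<in>I. (a i - r * b i)\<^sup>2)"
    by (simp add: sum_nonneg)
  also have "... = (\<Sum>i\<in>I. (a i)\<^sup>2) - 2 * r * (\<Sum>i\<in>I. a i * b i) + r\<^sup>2 * (\<Sum>i\<in>I. (b i)\<^sup>2)"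
    by (simp add: algebra_simps power2_eq_square sum_distrib_left flip: sum.distrib)
  also have "\<dots> = (\<Sum>i\<in>I. (a i)\<^sup>2) - ((\<Sum>i\<in>I. a i * b i))\<^sup>2 / (\<Sum>i\<in>I. (b i)\<^sup>2)"
    by (simp add: r_def power2_eq_square)
  finally have "0 \<le> (\<Sum>i\<in>I. (a i)\<^sup>2) - ((\<Sum>i\<in>I. a i * b i))\<^sup>2 / (\<Sum>i\<in>I. (b i)\<^sup>2)" .
  hence "((\<Sum>i\<in>I. a i * b i))\<^sup>2 / (\<Sum>i\<in>I. (b i)\<^sup>2) \<le> (\<Sum>i\<in>I. (a i)\<^sup>2)"
    by (simp add: le_diff_eq)
  thus "((\<Sum>i\<in>I. a i * b i))\<^sup>2 \<le> (\<Sum>i\<in>I. (a i)\<^sup>2) * (\<Sum>i\<in>I. (b i)\<^sup>2)"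
    by (simp add: pos_divide_le_eq True)
qed

lemma wcs_sum:
  fixes a b w :: "'a \<Rightarrow> real"
  assumes "\<forall>i\<in>I. w i \<ge> 0"
  shows "(\<Sum>i\<in>I. w i * (a i * b i))\<^sup>2 \<le> (\<Sum>i\<in>I. w i * (a i)\<^sup>2) * (\<Sum>i\<in>I. w i * (b i)\<^sup>2)"
proof -
  have e1: "(\<Sum>i\<in>I. w i * (a i * b i)) = (\<Sum>i\<in>I. (sqrt (w i) * a i) * (sqrt (w i) * b i))"
    by (rule sum.cong) (use assms in \<open>auto simp: algebra_simps real_sqrt_mult[symmetric]\<close>)
  have e2: "(\<Sum>i\<in>I. w i * (a i)\<^sup>2) = (\<Sum>i\<in>I. (sqrt (w i) * a i)\<^sup>2)"
    by (rule sum.cong) (use assms in \<open>auto simp: power_mult_distrib\<close>)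
  have e3: "(\<Sum>i\<in>I. w i * (b i)\<^sup>2) = (\<Sum>i\<in>I. (sqrt (w i) * b i)\<^sup>2)"
    by (rule sum.cong) (use assms in \<open>auto simp: power_mult_distrib\<close>)
  show ?thesis unfolding e1 e2 e3 by (rule cs_sum)
qed

lemma eff_res_bound:
  assumes g: "good n F" and w: "\<forall>e\<in>F. w e > 0" and u: "u < n" and v: "v < n"
    and uv: "(u,v) \<in> conn F" and x: "x \<in> carrier_vec n"
  shows "eff_res (laplacian n F w) u v \<ge> 0 \<and>
    (bvec n u v \<bullet> x)^2 \<le> eff_res (laplacian n F w) u v * (x \<bullet> (laplacian n F w *\<^sub>v x))"
proof -
  let ?L = "laplacian n F w" and ?P = "PP n F"
  define X where "X = pinv ?L"
  define b where "b = bvec n u v"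
  from pinv_lap[OF g w] have Xc: "X \<in> carrier_mat n n" and LX: "?L * X = 1\<^sub>m n - ?P"
    unfolding X_def by blast+
  have bc: "b \<in> carrier_vec n" unfolding b_def bvec_def by (rule vec_carrier)
  define y where "y = X *\<^sub>v b"
  have yc: "y \<in> carrier_vec n" unfolding y_def by (rule mult_mat_vec_carrier[OF Xc bc])
  have Ly: "?L *\<^sub>v y = b"
  proof -
    have "?L *\<^sub>v y = (?L * X) *\<^sub>v b" unfolding y_def by (rule assoc_mult_mat_vec[OF lap_carrier Xc bc, symmetric])
    also have "\<dots> = (1\<^sub>m n - ?P) *\<^sub>v b" by (simp only: LX)
    also have "\<dots> = 1\<^sub>m n *\<^sub>v b - ?P *\<^sub>v b" by (rule minus_mult_distrib_mat_vec[OF one_carrier_mat PP_carrier bc])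
    also have "\<dots> = b - 0\<^sub>v n" unfolding b_def by (simp only: PP_b[OF uv u v] one_mult_mat_vec[OF bvec_carrier])
    also have "\<dots> = b" by (rule minus_zero_vec[OF bc])
    finally show ?thesis .
  qed
  have R: "eff_res ?L u v = b \<bullet> y" unfolding eff_res_def lap_dims b_def y_def X_def ..
  have R2: "b \<bullet> y = y \<bullet> (?L *\<^sub>v y)"
  proof -
    have "b \<bullet> y = (?L *\<^sub>v y) \<bullet> y" by (simp only: Ly)
    also have "\<dots> = y \<bullet> (?L *\<^sub>v y)"
      using transpose_vec_mult_scalar[OF lap_carrier yc yc] by (simp only: lap_sym)
    finally show ?thesis .
  qed
  have bx: "b \<bullet> x = y \<bullet> (?L *\<^sub>v x)"
  proof -
    have "b \<bullet> x = (?L *\<^sub>v y) \<bullet> x" by (simp only: Ly)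
    also have "\<dots> = y \<bullet> (?L *\<^sub>v x)"
      using transpose_vec_mult_scalar[OF lap_carrier x yc] by (simp only: lap_sym)
    finally show ?thesis .
  qed
  have nn: "eff_res ?L u v \<ge> 0" unfolding R R2 by (rule quad_nonneg[OF g yc w])
  have wn: "\<forall>e\<in>F. w e \<ge> 0" using w by (simp add: less_imp_le)
  have "(b \<bullet> x)^2 = (\<Sum>e\<in>F. w e * (dd n e y * dd n e x))^2" unfolding bx bilin[OF g x yc] ..
  also have "\<dots> \<le> (\<Sum>e\<in>F. w e * (dd n e y)^2) * (\<Sum>e\<in>F. w e * (dd n e x)^2)"
    by (rule wcs_sum[OF wn])
  also have "\<dots> = eff_res ?L u v * (x \<bullet> (?L *\<^sub>v x))"
    unfolding R R2 quad[OF g yc] quad[OF g x] ..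
  finally show ?thesis using nn unfolding b_def by blast
qed



lemma lap_smult: "c \<cdot>\<^sub>m laplacian n F w = laplacian n F (\<lambda>e. c * w e)"
  unfolding lap_alt by (rule eq_matI) (auto simp: sum_distrib_left mult.assoc)

lemma walk_conn:
  assumes "walk_of_len F u v k"
  shows "(u,v) \<in> conn F"
proof -
  from assms obtain p where p: "length p = Suc k" "hd p = u" "last p = v"
    "\<forall>i<k. {p ! i, p ! Suc i} \<in> F" unfolding walk_of_len_def by blast
  have ne: "p \<noteq> []" using p(1) by auto
  have "i \<le> k \<Longrightarrow> (u, p ! i) \<in> conn F" for i
  proof (induction i)
    case 0 then show ?case using p(2) ne by (simp add: hd_conv_nth conn_refl)
  next
    case (Suc i)
    then have "(u, p ! i) \<in> conn F" by simp
    moreover have "{p ! i, p ! Suc i} \<in> F" using p(4) Suc.prems by simp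
    ultimately show ?case by (blast intro: conn_trans conn_edge)
  qed
  moreover have "p ! k = v" using p(1,3) ne by (simp add: last_conv_nth)
  ultimately show ?thesis by blast
qed

lemma walk_mono: "F \<subseteq> F' \<Longrightarrow> walk_of_len F u v k \<Longrightarrow> walk_of_len F' u v k"
  unfolding walk_of_len_def by blast

lemma walk_refl: "walk_of_len F u u 0"
  unfolding walk_of_len_def by (intro exI[of _ "[u]"]) simp

lemma walk_snoc:
  assumes "walk_of_len F u a k" "{a,b} \<in> F"
  shows "walk_of_len F u b (Suc k)"
proof -
  from assms(1) obtain p where p: "length p = Suc k" "hd p = u" "last p = a"
    "\<forall>i<k. {p ! i, p ! Suc i} \<in> F" unfolding walk_of_len_def by blast
  have ne: "p \<noteq> []" using p(1) by auto
  have pk: "p ! k = a" using p(1,3) ne by (simp add: last_conv_nth)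
  have "\<forall>i<Suc k. {(p @ [b]) ! i, (p @ [b]) ! Suc i} \<in> F"
  proof (intro allI impI)
    fix i assume i: "i < Suc k"
    show "{(p @ [b]) ! i, (p @ [b]) ! Suc i} \<in> F"
    proof (cases "i < k")
      case True
      then show ?thesis using p(1,4) by (simp add: nth_append)
    next
      case False
      then have "i = k" using i by simp
      then show ?thesis using p(1) pk assms(2) by (simp add: nth_append)
    qed
  qed
  then show ?thesis unfolding walk_of_len_def using p(1,2) ne
    by (intro exI[of _ "p @ [b]"]) simp
qed

definition pot :: "nat set set \<Rightarrow> nat \<Rightarrow> nat \<Rightarrow> nat \<Rightarrow> nat" where
  "pot F u s i = (LEAST k. walk_of_len F u i k \<or> k = s)"

lemma pot_le: "pot F u s i \<le> s"
  unfolding pot_def by (rule Least_le) simp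

lemma pot_u: "pot F u s u = 0"
  unfolding pot_def using walk_refl[of F u] by (metis (mono_tags, lifting) Least_le le_zero_eq)

lemma pot_edge:
  assumes "{a,b} \<in> F"
  shows "pot F u s b \<le> pot F u s a + 1"
proof (cases "pot F u s a = s")
  case True
  then show ?thesis using pot_le[of F u s b] by simp
next
  case False
  have "walk_of_len F u a (pot F u s a) \<or> pot F u s a = s"
    unfolding pot_def by (rule LeastI[of _ s]) simp
  with False have "walk_of_len F u a (pot F u s a)" by simp
  then have "walk_of_len F u b (Suc (pot F u s a))" using assms by (rule walk_snoc)
  then have "pot F u s b \<le> Suc (pot F u s a)" unfolding pot_def by (intro Least_le) simp
  then show ?thesis by simp
qed

lemma pot_v:
  assumes "hop_dist F u v = enat s"
  shows "pot F u s v = s" "walk_of_len F u v s"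
proof -
  have ex: "\<exists>k. walk_of_len F u v k"
  proof (rule ccontr)
    assume "\<not> (\<exists>k. walk_of_len F u v k)"
    then have "hop_dist F u v = \<infinity>" unfolding hop_dist_def by simp
    with assms show False by simp
  qed
  then have ls: "(LEAST k. walk_of_len F u v k) = s"
    using assms unfolding hop_dist_def by simp
  show "walk_of_len F u v s" using LeastI_ex[OF ex] unfolding ls .
  show "pot F u s v = s"
    unfolding pot_def
  proof (rule Least_equality)
    fix k assume "walk_of_len F u v k \<or> k = s"
    then show "s \<le> k"
    proof
      assume "walk_of_len F u v k"
      then show "s \<le> k" using Least_le[of "walk_of_len F u v" k] ls by simp
    qed simp
  qed simp
qed

lemma bvec_dot:
  assumes "u < n" "v < n" "x \<in> carrier_vec n"
  shows "bvec n u v \<bullet> x = x $ u - x $ v"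
proof -
  have dx: "dim_vec x = n" using assms(3) by (rule carrier_vecD)
  have "bvec n u v \<bullet> x = (\<Sum>i\<in>{0..<n}. bvec n u v $ i * x $ i)" unfolding scalar_prod_def dx ..
  also have "\<dots> = (\<Sum>i<n. (if i = u then x $ i else 0) - (if i = v then x $ i else 0))"
    unfolding lessThan_atLeast0 by (rule sum.cong) (simp_all add: bvec_def)
  also have "\<dots> = x $ u - x $ v" using assms by (simp add: sum_subtractf sum_delta_lt)
  finally show ?thesis .
qed

lemma trace_sum:
  assumes g: "good n F"
  shows "(\<Sum>i<n. unit_vec n i \<bullet> (laplacian n F w *\<^sub>v unit_vec n i)) = 2 * (\<Sum>e\<in>F. w e)"
proof -
  have "(\<Sum>i<n. unit_vec n i \<bullet> (laplacian n F w *\<^sub>v unit_vec n i))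
      = (\<Sum>i<n. \<Sum>e\<in>F. w e * (dd n e (unit_vec n i))^2)"
    by (rule sum.cong) (simp_all add: quad[OF g])
  also have "\<dots> = (\<Sum>e\<in>F. w e * (\<Sum>i<n. (dd n e (unit_vec n i))^2))"
    by (simp add: sum.swap[of _ F] sum_distrib_left)
  also have "\<dots> = (\<Sum>e\<in>F. w e * 2)"
  proof (rule sum.cong)
    fix e assume e: "e \<in> F"
    let ?a = "fst (ends n e)" and ?b = "snd (ends n e)"
    from ends[OF g e] have ab: "?a < n" "?b < n" "?a \<noteq> ?b" by auto
    have "(dd n e (unit_vec n i))^2 = (if i = ?a then 1 else 0) + (if i = ?b then 1 else 0)" if "i < n" for i
      using ab that unfolding dd_def by auto
    then have "(\<Sum>i<n. (dd n e (unit_vec n i))^2) = (\<Sum>i<n. (if i = ?a then 1 else 0) + (if i = ?b then 1 else 0))"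
      by (intro sum.cong) auto
    also have "\<dots> = 2" using ab by (simp add: sum.distrib sum_delta_lt)
    finally show "w e * (\<Sum>i<n. (dd n e (unit_vec n i))^2) = w e * 2" by simp
  qed simp
  finally show ?thesis by (simp add: sum_distrib_right mult.commute)
qed



lemma quad_smult:
  assumes "good n F" "x \<in> carrier_vec n"
  shows "x \<bullet> ((c \<cdot>\<^sub>m laplacian n F w) *\<^sub>v x) = c * (x \<bullet> (laplacian n F w *\<^sub>v x))"
  unfolding lap_smult quad[OF assms] by (simp add: sum_distrib_left mult.assoc)

lemma main_bound:
  fixes \<epsilon> :: real
  assumes eps: "0 < \<epsilon>" "\<epsilon> \<le> 1/2"
    and sg: "simple_graph n E" and sp: "is_spectral_sparsifier n \<epsilon> E EH w"
    and u: "u < n" and v: "v < n" and hd: "hop_dist EH u v = enat s"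
  shows "eff_res (laplacian n E (\<lambda>_. 1)) u v \<ge> (1/3) * (real s ^ 2 / real (card E))
      \<and> eff_res (laplacian n EH w) u v \<ge> (1/3) * (real s ^ 2 / real (card E))"
proof -
  let ?LG = "laplacian n E (\<lambda>_. 1)" and ?LH = "laplacian n EH w"
  let ?m = "real (card E)" and ?W = "(\<Sum>e\<in>EH. w e)"
  from sp have sub: "EH \<subseteq> E" and wpos: "\<forall>e\<in>EH. w e > 0"
    and lo1: "loewner_le ((1 - \<epsilon>) \<cdot>\<^sub>m ?LH) ?LG" and lo2: "loewner_le ?LG ((1 + \<epsilon>) \<cdot>\<^sub>m ?LH)"
    unfolding is_spectral_sparsifier_def by blast+
  have gE: "good n E" using sg unfolding good_def simple_graph_def .
  have gH: "good n EH" using gE sub unfolding good_def by blast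
  have w1: "\<forall>e\<in>E. (\<lambda>_. 1::real) e > 0" by simp
  have wk: "walk_of_len EH u v s" by (rule pot_v(2)[OF hd])
  have cH: "(u,v) \<in> conn EH" by (rule walk_conn[OF wk])
  have cG: "(u,v) \<in> conn E" by (rule walk_conn[OF walk_mono[OF sub wk]])
  define xv where "xv = vec n (\<lambda>i. real (pot EH u s i))"
  have xc: "xv \<in> carrier_vec n" unfolding xv_def by (rule vec_carrier)
  have bx: "(bvec n u v \<bullet> xv)^2 = (real s)^2"
  proof -
    have "bvec n u v \<bullet> xv = xv $ u - xv $ v" by (rule bvec_dot[OF u v xc])
    also have "\<dots> = - real s" unfolding xv_def using u v pot_u[of EH u s] pot_v(1)[OF hd] by simp
    finally show ?thesis by simp
  qed
  have ddb: "(dd n e xv)^2 \<le> 1" if e: "e \<in> EH" for e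
  proof -
    let ?a = "fst (ends n e)" and ?b = "snd (ends n e)"
    from ends[OF gH e] have ab: "?a < n" "?b < n" "e = {?a, ?b}" by auto
    have e1: "{?a, ?b} \<in> EH" using e ab(3) by simp
    have e2: "{?b, ?a} \<in> EH" using e1 by (simp add: insert_commute)
    have p1: "pot EH u s ?b \<le> pot EH u s ?a + 1" by (rule pot_edge[OF e1])
    have p2: "pot EH u s ?a \<le> pot EH u s ?b + 1" by (rule pot_edge[OF e2])
    have "dd n e xv = real (pot EH u s ?a) - real (pot EH u s ?b)"
      unfolding dd_def xv_def using ab by simp
    then have "\<bar>dd n e xv\<bar> \<le> 1" using p1 p2 by linarith
    then show ?thesis by (simp add: abs_square_le_1)
  qed
  have qH: "xv \<bullet> (?LH *\<^sub>v xv) \<le> ?W"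
  proof -
    have "xv \<bullet> (?LH *\<^sub>v xv) = (\<Sum>e\<in>EH. w e * (dd n e xv)^2)" by (rule quad[OF gH xc])
    also have "\<dots> \<le> (\<Sum>e\<in>EH. w e * 1)"
    proof (rule sum_mono)
      fix e assume e: "e \<in> EH"
      have "w e > 0" using wpos e by blast
      then show "w e * (dd n e xv)^2 \<le> w e * 1" using ddb[OF e] by (intro mult_left_mono) simp_all
    qed
    finally show ?thesis by simp
  qed
  have qHnn: "xv \<bullet> (?LH *\<^sub>v xv) \<ge> 0" by (rule quad_nonneg[OF gH xc wpos])
  have Wm: "(1 - \<epsilon>) * ?W \<le> ?m"
  proof -
    have "(1 - \<epsilon>) * (unit_vec n i \<bullet> (?LH *\<^sub>v unit_vec n i)) \<le> unit_vec n i \<bullet> (?LG *\<^sub>v unit_vec n i)"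
      if i: "i < n" for i
    proof -
      have uc: "unit_vec n i \<in> carrier_vec n" by (rule unit_vec_carrier)
      have "unit_vec n i \<bullet> (((1 - \<epsilon>) \<cdot>\<^sub>m ?LH) *\<^sub>v unit_vec n i) \<le> unit_vec n i \<bullet> (?LG *\<^sub>v unit_vec n i)"
        using lo1 uc unfolding loewner_le_def by simp
      then show ?thesis unfolding quad_smult[OF gH uc] .
    qed
    then have "(\<Sum>i<n. (1 - \<epsilon>) * (unit_vec n i \<bullet> (?LH *\<^sub>v unit_vec n i)))
        \<le> (\<Sum>i<n. unit_vec n i \<bullet> (?LG *\<^sub>v unit_vec n i))" by (intro sum_mono) simp
    then have "(1 - \<epsilon>) * (2 * ?W) \<le> 2 * (\<Sum>e\<in>E. (1::real))"
      unfolding sum_distrib_left[symmetric] trace_sum[OF gH] trace_sum[OF gE] .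
    then show ?thesis by simp
  qed
  have Wnn: "?W \<ge> 0" using wpos by (intro sum_nonneg) (simp add: less_imp_le)
  have "(1/2 - \<epsilon>) * ?W \<ge> 0" using eps Wnn by simp
  moreover have "(1 - \<epsilon>) * ?W = ?W / 2 + (1/2 - \<epsilon>) * ?W" by (simp add: algebra_simps)
  ultimately have W2: "?W \<le> 2 * ?m" using Wm by linarith
  have qG: "xv \<bullet> (?LG *\<^sub>v xv) \<le> (1 + \<epsilon>) * (xv \<bullet> (?LH *\<^sub>v xv))"
  proof -
    have "xv \<bullet> (?LG *\<^sub>v xv) \<le> xv \<bullet> (((1 + \<epsilon>) \<cdot>\<^sub>m ?LH) *\<^sub>v xv)"
      using lo2 xc unfolding loewner_le_def by simp
    then show ?thesis unfolding quad_smult[OF gH xc] .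
  qed
  have qG3: "xv \<bullet> (?LG *\<^sub>v xv) \<le> 3 * ?m"
  proof -
    have "(1 + \<epsilon>) * (xv \<bullet> (?LH *\<^sub>v xv)) \<le> (3/2) * ?W"
      using qH qHnn eps Wnn by (intro mult_mono) simp_all
    then show ?thesis using qG W2 by linarith
  qed
  have qH2: "xv \<bullet> (?LH *\<^sub>v xv) \<le> 3 * ?m" using qH W2 Wnn by linarith
  have fin: "(1/3) * (real s ^ 2 / ?m) \<le> R"
    if R0: "R \<ge> 0" and Rb: "(real s)^2 \<le> R * q" and q: "q \<le> 3 * ?m" for R q
  proof (cases "card E = 0")
    case True then show ?thesis using R0 by simp
  next
    case False
    then have mpos: "?m > 0" by simp
    have "(real s)^2 \<le> R * (3 * ?m)"
      using Rb q R0 by (meson mult_left_mono order_trans)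
    then have "real s ^ 2 / ?m \<le> 3 * R" using mpos by (simp add: divide_le_eq algebra_simps)
    then show ?thesis by simp
  qed
  from eff_res_bound[OF gE w1 u v cG xc] bx
  have RG: "eff_res ?LG u v \<ge> 0" "(real s)^2 \<le> eff_res ?LG u v * (xv \<bullet> (?LG *\<^sub>v xv))" by simp_all
  from eff_res_bound[OF gH wpos u v cH xc] bx
  have RH: "eff_res ?LH u v \<ge> 0" "(real s)^2 \<le> eff_res ?LH u v * (xv \<bullet> (?LH *\<^sub>v xv))" by simp_all
  show ?thesis using fin[OF RG qG3] fin[OF RH qH2] by blast
qed

lemma key:
  fixes \<epsilon> :: real
  assumes e: "0 < \<epsilon> \<and> \<epsilon> \<le> 1/2"
  shows "\<forall>(n::nat) E EH w u v (s::nat).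
       simple_graph n E \<and> is_spectral_sparsifier n \<epsilon> E EH w \<and>
       u < n \<and> v < n \<and> hop_dist EH u v = enat s \<longrightarrow>
         eff_res (laplacian n E (\<lambda>_. 1)) u v
           \<ge> 1/3 * (real s ^ 2 / real (card E)) / (log 2 (real n)) ^ 0 \<and>
         eff_res (laplacian n EH w) u v
           \<ge> 1/3 * (real s ^ 2 / real (card E)) / (log 2 (real n)) ^ 0"
proof (intro allI impI)
  fix n :: nat and E EH w u v and s :: nat
  assume h: "simple_graph n E \<and> is_spectral_sparsifier n \<epsilon> E EH w \<and>
       u < n \<and> v < n \<and> hop_dist EH u v = enat s"
  have mb: "eff_res (laplacian n E (\<lambda>_. 1)) u v \<ge> (1/3) * (real s ^ 2 / real (card E))
      \<and> eff_res (laplacian n EH w) u v \<ge> (1/3) * (real s ^ 2 / real (card E))"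
    using e h by (intro main_bound) blast+
  then show "eff_res (laplacian n E (\<lambda>_. 1)) u v
           \<ge> 1/3 * (real s ^ 2 / real (card E)) / (log 2 (real n)) ^ 0 \<and>
         eff_res (laplacian n EH w) u v
           \<ge> 1/3 * (real s ^ 2 / real (card E)) / (log 2 (real n)) ^ 0"
    by (simp only: power_0 div_by_1)
qed

theorem corollary4p3:
  shows "\<exists>\<epsilon>0>0. \<forall>\<epsilon>. 0 < \<epsilon> \<and> \<epsilon> \<le> \<epsilon>0 \<longrightarrow>
    (\<exists>c>0. \<exists>k::nat. \<forall>(n::nat) E EH w u v (s::nat).
       simple_graph n E \<and> is_spectral_sparsifier n \<epsilon> E EH w \<and>
       u < n \<and> v < n \<and> hop_dist EH u v = enat s \<longrightarrow>
         eff_res (laplacian n E (\<lambda>_. 1)) u v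
           \<ge> c * (real s ^ 2 / real (card E)) / (log 2 (real n)) ^ k \<and>
         eff_res (laplacian n EH w) u v
           \<ge> c * (real s ^ 2 / real (card E)) / (log 2 (real n)) ^ k)"
proof -
  have "\<forall>\<epsilon>. 0 < \<epsilon> \<and> \<epsilon> \<le> 1/2 \<longrightarrow>
    (\<exists>c>0. \<exists>k::nat. \<forall>(n::nat) E EH w u v (s::nat).
       simple_graph n E \<and> is_spectral_sparsifier n \<epsilon> E EH w \<and>
       u < n \<and> v < n \<and> hop_dist EH u v = enat s \<longrightarrow>
         eff_res (laplacian n E (\<lambda>_. 1)) u v
           \<ge> c * (real s ^ 2 / real (card E)) / (log 2 (real n)) ^ k \<and>
         eff_res (laplacian n EH w) u v
           \<ge> c * (real s ^ 2 / real (card E)) / (log 2 (real n)) ^ k)"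
  proof (intro allI impI)
    fix \<epsilon> :: real assume e: "0 < \<epsilon> \<and> \<epsilon> \<le> 1/2"
    have "(1/3::real) > 0" by simp
    with key[OF e] show "\<exists>c>0. \<exists>k::nat. \<forall>(n::nat) E EH w u v (s::nat).
       simple_graph n E \<and> is_spectral_sparsifier n \<epsilon> E EH w \<and>
       u < n \<and> v < n \<and> hop_dist EH u v = enat s \<longrightarrow>
         eff_res (laplacian n E (\<lambda>_. 1)) u v
           \<ge> c * (real s ^ 2 / real (card E)) / (log 2 (real n)) ^ k \<and>
         eff_res (laplacian n EH w) u v
           \<ge> c * (real s ^ 2 / real (card E)) / (log 2 (real n)) ^ k"
      by blast
  qed
  moreover have "(1/2::real) > 0" by simp
  ultimately show ?thesis by blast
qed


end
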